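(* Let $F:\mathcal{D}\to\mathcal{C}$, $G:\mathcal{C}\to\mathcal{D}$ and $H:\mathcal{D}\to\mathcal{E}$ be functors, and assume that $G$ is a right adjoint or a left adjoint of $F$. If $H\circ G$ is naturally full and $F$ is separable, then $H$ is naturally full.
   Context: For a functor $F:\mathcal{A}\to\mathcal{B}$, let $\mathcal{F}:\mathrm{Hom}_{\mathcal{A}}(\bullet,\bullet)\to\mathrm{Hom}_{\mathcal{B}}(F(\bullet),F(\bullet))$ be the natural transformation (of functors $\mathcal{A}^{op}\times\mathcal{A}\to\mathbf{Sets}$) given by $\mathcal{F}_{A,A'}(f)=F(f)$. $F$ is called separable if there is a natural transformation $\mathcal{T}:\mathrm{Hom}_{\mathcal{B}}(F(\bullet),F(\bullet))\to\mathrm{Hom}_{\mathcal{A}}(\bullet,\bullet)$ with $\mathcal{T}\circ\mathcal{F}=\mathrm{id}$. $F$ is called naturally full if there is a natural transformation $\mathcal{P}:\mathrm{Hom}_{\mathcal{B}}(F(\bullet),F(\bullet))\to\mathrm{Hom}_{\mathcal{A}}(\bullet,\bullet)$ with $\mathcal{F}\circ\mathcal{P}=\mathrm{id}$, i.e. $F(\mathcal{P}_{A,A'}(u))=u$ for all $u:F(A)\to F(A')$, naturality meaning $\mathcal{P}_{X,T}(F(h)\circ g\circ F(f))=h\circ\mathcal{P}_{Y,Z}(g)\circ f$. *)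

theory Defs
  imports Main
begin

record ('o, 'a) cat =
  cobj :: "'o set"
  carr :: "'a set"
  cdom :: "'a \<Rightarrow> 'o"
  ccod :: "'a \<Rightarrow> 'o"
  ccomp :: "'a \<Rightarrow> 'a \<Rightarrow> 'a"   (* ccomp C g f = g \<circ> f *)
  cid :: "'o \<Rightarrow> 'a"

definition hom :: "('o, 'a, 'm) cat_scheme \<Rightarrow> 'o \<Rightarrow> 'o \<Rightarrow> 'a set" where
  "hom C A B = {f \<in> carr C. cdom C f = A \<and> ccod C f = B}"

definition category :: "('o, 'a, 'm) cat_scheme \<Rightarrow> bool" where
  "category C \<longleftrightarrow>
     (\<forall>f \<in> carr C. cdom C f \<in> cobj C \<and> ccod C f \<in> cobj C)
   \<and> (\<forall>A \<in> cobj C. cid C A \<in> hom C A A)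
   \<and> (\<forall>f \<in> carr C. \<forall>g \<in> carr C. ccod C f = cdom C g \<longrightarrow>
        ccomp C g f \<in> hom C (cdom C f) (ccod C g))
   \<and> (\<forall>f \<in> carr C. \<forall>g \<in> carr C. \<forall>h \<in> carr C.
        ccod C f = cdom C g \<and> ccod C g = cdom C h \<longrightarrow>
        ccomp C h (ccomp C g f) = ccomp C (ccomp C h g) f)
   \<and> (\<forall>f \<in> carr C. ccomp C (cid C (ccod C f)) f = f \<and> ccomp C f (cid C (cdom C f)) = f)"

definition is_functor ::
  "('o1, 'a1, 'm1) cat_scheme \<Rightarrow> ('o2, 'a2, 'm2) cat_scheme \<Rightarrow> ('o1 \<Rightarrow> 'o2) \<Rightarrow> ('a1 \<Rightarrow> 'a2) \<Rightarrow> bool" where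
  "is_functor C D Fo Fa \<longleftrightarrow> category C \<and> category D
   \<and> (\<forall>A \<in> cobj C. Fo A \<in> cobj D)
   \<and> (\<forall>f \<in> carr C. Fa f \<in> hom D (Fo (cdom C f)) (Fo (ccod C f)))
   \<and> (\<forall>f \<in> carr C. \<forall>g \<in> carr C. ccod C f = cdom C g \<longrightarrow>
        Fa (ccomp C g f) = ccomp D (Fa g) (Fa f))
   \<and> (\<forall>A \<in> cobj C. Fa (cid C A) = cid D (Fo A))"

definition naturally_full ::
  "('o1, 'a1, 'm1) cat_scheme \<Rightarrow> ('o2, 'a2, 'm2) cat_scheme \<Rightarrow> ('o1 \<Rightarrow> 'o2) \<Rightarrow> ('a1 \<Rightarrow> 'a2) \<Rightarrow> bool" where
  "naturally_full C D Fo Fa \<longleftrightarrow>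
   (\<exists>P :: 'o1 \<Rightarrow> 'o1 \<Rightarrow> 'a2 \<Rightarrow> 'a1.
      (\<forall>A \<in> cobj C. \<forall>A' \<in> cobj C. \<forall>u \<in> hom D (Fo A) (Fo A').
          P A A' u \<in> hom C A A' \<and> Fa (P A A' u) = u)
    \<and> (\<forall>X \<in> cobj C. \<forall>Y \<in> cobj C. \<forall>Z \<in> cobj C. \<forall>T \<in> cobj C.
       \<forall>f \<in> hom C X Y. \<forall>g \<in> hom D (Fo Y) (Fo Z). \<forall>h \<in> hom C Z T.
          P X T (ccomp D (Fa h) (ccomp D g (Fa f))) = ccomp C h (ccomp C (P Y Z g) f)))"

definition separable ::
  "('o1, 'a1, 'm1) cat_scheme \<Rightarrow> ('o2, 'a2, 'm2) cat_scheme \<Rightarrow> ('o1 \<Rightarrow> 'o2) \<Rightarrow> ('a1 \<Rightarrow> 'a2) \<Rightarrow> bool" where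
  "separable C D Fo Fa \<longleftrightarrow>
   (\<exists>T :: 'o1 \<Rightarrow> 'o1 \<Rightarrow> 'a2 \<Rightarrow> 'a1.
      (\<forall>A \<in> cobj C. \<forall>A' \<in> cobj C. \<forall>u \<in> hom D (Fo A) (Fo A'). T A A' u \<in> hom C A A')
    \<and> (\<forall>A \<in> cobj C. \<forall>A' \<in> cobj C. \<forall>f \<in> hom C A A'. T A A' (Fa f) = f)
    \<and> (\<forall>X \<in> cobj C. \<forall>Y \<in> cobj C. \<forall>Z \<in> cobj C. \<forall>T' \<in> cobj C.
       \<forall>f \<in> hom C X Y. \<forall>g \<in> hom D (Fo Y) (Fo Z). \<forall>h \<in> hom C Z T'.
          T X T' (ccomp D (Fa h) (ccomp D g (Fa f))) = ccomp C h (ccomp C (T Y Z g) f)))"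

definition adjunction ::
  "('o1, 'a1, 'm1) cat_scheme \<Rightarrow> ('o2, 'a2, 'm2) cat_scheme \<Rightarrow>
   ('o1 \<Rightarrow> 'o2) \<Rightarrow> ('a1 \<Rightarrow> 'a2) \<Rightarrow> ('o2 \<Rightarrow> 'o1) \<Rightarrow> ('a2 \<Rightarrow> 'a1) \<Rightarrow> bool" where
  "adjunction X Y Lo La Ro Ra \<longleftrightarrow> is_functor X Y Lo La \<and> is_functor Y X Ro Ra \<and>
   (\<exists>(\<eta> :: 'o1 \<Rightarrow> 'a1) (\<epsilon> :: 'o2 \<Rightarrow> 'a2).
      (\<forall>A \<in> cobj X. \<eta> A \<in> hom X A (Ro (Lo A)))
    \<and> (\<forall>A \<in> cobj X. \<forall>B \<in> cobj X. \<forall>f \<in> hom X A B.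
         ccomp X (Ra (La f)) (\<eta> A) = ccomp X (\<eta> B) f)
    \<and> (\<forall>U \<in> cobj Y. \<epsilon> U \<in> hom Y (Lo (Ro U)) U)
    \<and> (\<forall>U \<in> cobj Y. \<forall>V \<in> cobj Y. \<forall>g \<in> hom Y U V.
         ccomp Y (\<epsilon> V) (La (Ra g)) = ccomp Y g (\<epsilon> U))
    \<and> (\<forall>A \<in> cobj X. ccomp Y (\<epsilon> (Lo A)) (La (\<eta> A)) = cid Y (Lo A))
    \<and> (\<forall>U \<in> cobj Y. ccomp X (Ra (\<epsilon> U)) (\<eta> (Ro U)) = cid X (Ro U)))"

end

theory Submission
  imports Defs
begin

lemma cat_simps:
  assumes "category C"
  shows "A \<in> cobj C \<Longrightarrow> cid C A \<in> carr C"
    and "A \<in> cobj C \<Longrightarrow> cdom C (cid C A) = A"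
    and "A \<in> cobj C \<Longrightarrow> ccod C (cid C A) = A"
    and "f \<in> carr C \<Longrightarrow> cdom C f \<in> cobj C"
    and "f \<in> carr C \<Longrightarrow> ccod C f \<in> cobj C"
    and "f \<in> carr C \<Longrightarrow> g \<in> carr C \<Longrightarrow> ccod C f = cdom C g \<Longrightarrow> ccomp C g f \<in> carr C"
    and "f \<in> carr C \<Longrightarrow> g \<in> carr C \<Longrightarrow> ccod C f = cdom C g \<Longrightarrow> cdom C (ccomp C g f) = cdom C f"
    and "f \<in> carr C \<Longrightarrow> g \<in> carr C \<Longrightarrow> ccod C f = cdom C g \<Longrightarrow> ccod C (ccomp C g f) = ccod C g"
    and "f \<in> carr C \<Longrightarrow> g \<in> carr C \<Longrightarrow> h \<in> carr C \<Longrightarrow> ccod C f = cdom C g \<Longrightarrow> ccod C g = cdom C h \<Longrightarrow>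
         ccomp C (ccomp C h g) f = ccomp C h (ccomp C g f)"
    and "f \<in> carr C \<Longrightarrow> B = ccod C f \<Longrightarrow> ccomp C (cid C B) f = f"
    and "f \<in> carr C \<Longrightarrow> B = cdom C f \<Longrightarrow> ccomp C f (cid C B) = f"
  using assms unfolding category_def hom_def by auto

lemma fun_simps:
  assumes "is_functor C D Fo Fa"
  shows "A \<in> cobj C \<Longrightarrow> Fo A \<in> cobj D"
    and "f \<in> carr C \<Longrightarrow> Fa f \<in> carr D"
    and "f \<in> carr C \<Longrightarrow> cdom D (Fa f) = Fo (cdom C f)"
    and "f \<in> carr C \<Longrightarrow> ccod D (Fa f) = Fo (ccod C f)"
    and "f \<in> carr C \<Longrightarrow> g \<in> carr C \<Longrightarrow> ccod C f = cdom C g \<Longrightarrow> Fa (ccomp C g f) = ccomp D (Fa g) (Fa f)"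
    and "A \<in> cobj C \<Longrightarrow> Fa (cid C A) = cid D (Fo A)"
  using assms unfolding is_functor_def hom_def by auto

lemma core:
  fixes CD :: "('od, 'ad) cat" and CC :: "('oc, 'ac) cat" and CE :: "('oe, 'ae) cat"
    and Fo :: "'od \<Rightarrow> 'oc" and Fa :: "'ad \<Rightarrow> 'ac"
    and Go :: "'oc \<Rightarrow> 'od" and Ga :: "'ac \<Rightarrow> 'ad"
    and Ho :: "'od \<Rightarrow> 'oe" and Ha :: "'ad \<Rightarrow> 'ae"
  assumes F: "is_functor CD CC Fo Fa"
    and G: "is_functor CC CD Go Ga"
    and H: "is_functor CD CE Ho Ha"
    and HG: "naturally_full CC CE (Ho \<circ> Go) (Ha \<circ> Ga)"
    and i: "\<And>A. A \<in> cobj CD \<Longrightarrow> i A \<in> carr CD \<and> cdom CD (i A) = A \<and> ccod CD (i A) = Go (Fo A)"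
    and r: "\<And>A. A \<in> cobj CD \<Longrightarrow> r A \<in> carr CD \<and> ccod CD (r A) = A \<and> cdom CD (r A) = Go (Fo A)"
    and ri: "\<And>A. A \<in> cobj CD \<Longrightarrow> ccomp CD (r A) (i A) = cid CD A"
    and inat: "\<And>f. f \<in> carr CD \<Longrightarrow> ccomp CD (i (ccod CD f)) f = ccomp CD (Ga (Fa f)) (i (cdom CD f))"
    and rnat: "\<And>f. f \<in> carr CD \<Longrightarrow> ccomp CD f (r (cdom CD f)) = ccomp CD (r (ccod CD f)) (Ga (Fa f))"
  shows "naturally_full CD CE Ho Ha"
proof -
  have cD: "category CD" and cC: "category CC" and cE: "category CE"
    using F H unfolding is_functor_def by auto
  obtain P where P0: "\<forall>A \<in> cobj CC. \<forall>A' \<in> cobj CC. \<forall>u \<in> hom CE (Ho (Go A)) (Ho (Go A')).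
          P A A' u \<in> hom CC A A' \<and> Ha (Ga (P A A' u)) = u"
    and P2': "\<forall>X \<in> cobj CC. \<forall>Y \<in> cobj CC. \<forall>Z \<in> cobj CC. \<forall>T \<in> cobj CC.
       \<forall>f \<in> hom CC X Y. \<forall>g \<in> hom CE (Ho (Go Y)) (Ho (Go Z)). \<forall>h \<in> hom CC Z T.
          P X T (ccomp CE (Ha (Ga h)) (ccomp CE g (Ha (Ga f)))) = ccomp CC h (ccomp CC (P Y Z g) f)"
    using HG unfolding naturally_full_def o_def by (elim exE conjE) 
  have P2: "\<And>X Y Z T f g h. X \<in> cobj CC \<Longrightarrow> Y \<in> cobj CC \<Longrightarrow> Z \<in> cobj CC \<Longrightarrow> T \<in> cobj CC \<Longrightarrow>
       f \<in> hom CC X Y \<Longrightarrow> g \<in> hom CE (Ho (Go Y)) (Ho (Go Z)) \<Longrightarrow> h \<in> hom CC Z T \<Longrightarrow>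
          P X T (ccomp CE (Ha (Ga h)) (ccomp CE g (Ha (Ga f)))) = ccomp CC h (ccomp CC (P Y Z g) f)"
    using P2' by blast
  have P1: "\<And>A A' u. A \<in> cobj CC \<Longrightarrow> A' \<in> cobj CC \<Longrightarrow> u \<in> carr CE \<Longrightarrow>
        cdom CE u = Ho (Go A) \<Longrightarrow> ccod CE u = Ho (Go A') \<Longrightarrow>
        P A A' u \<in> carr CC \<and> cdom CC (P A A' u) = A \<and> ccod CC (P A A' u) = A' \<and> Ha (Ga (P A A' u)) = u"
    using P0 unfolding hom_def by blast
  note S = cat_simps[OF cD] cat_simps[OF cC] cat_simps[OF cE] fun_simps[OF F] fun_simps[OF G] fun_simps[OF H]
    i r
  have Hri: "ccomp CE (Ha (r A)) (ccomp CE (Ha (i A)) x) = x"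
    if "A \<in> cobj CD" "x \<in> carr CE" "ccod CE x = Ho A" for A x
  proof -
    have "ccomp CE (Ha (r A)) (ccomp CE (Ha (i A)) x) = ccomp CE (ccomp CE (Ha (r A)) (Ha (i A))) x"
      using that by (simp add: S)
    also have "ccomp CE (Ha (r A)) (Ha (i A)) = Ha (ccomp CD (r A) (i A))"
      using that by (simp add: S)
    finally show ?thesis using that by (simp add: S ri)
  qed
  have Hri2: "ccomp CE x (ccomp CE (Ha (r A)) (Ha (i A))) = x"
    if "A \<in> cobj CD" "x \<in> carr CE" "cdom CE x = Ho A" for A x
  proof -
    have "ccomp CE (Ha (r A)) (Ha (i A)) = Ha (ccomp CD (r A) (i A))"
      using that by (simp add: S)
    then show ?thesis using that by (simp add: S ri)
  qed
  define Q where "Q A A' u = P (Fo A) (Fo A') (ccomp CE (Ha (i A')) (ccomp CE u (Ha (r A))))" for A A' u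
  define P' where "P' A A' u = ccomp CD (r A') (ccomp CD (Ga (Q A A' u)) (i A))" for A A' u
  have Q: "Q A A' u \<in> carr CC \<and> cdom CC (Q A A' u) = Fo A \<and> ccod CC (Q A A' u) = Fo A' \<and>
     Ha (Ga (Q A A' u)) = ccomp CE (Ha (i A')) (ccomp CE u (Ha (r A)))"
    if "A \<in> cobj CD" "A' \<in> cobj CD" "u \<in> carr CE" "cdom CE u = Ho A" "ccod CE u = Ho A'" for A A' u
    unfolding Q_def using that by (intro P1) (simp_all add: S)
  show ?thesis
    unfolding naturally_full_def
  proof (intro exI[of _ P'] conjI ballI)
    fix A A' u assume a: "A \<in> cobj CD" "A' \<in> cobj CD" "u \<in> hom CE (Ho A) (Ho A')"
    then have u: "u \<in> carr CE" "cdom CE u = Ho A" "ccod CE u = Ho A'" by (auto simp: hom_def)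
    note Qa = Q[OF a(1,2) u]
    show "P' A A' u \<in> hom CD A A'" unfolding P'_def hom_def using a(1,2) Qa by (simp add: S)
    show "Ha (P' A A' u) = u" unfolding P'_def using a(1,2) Qa u by (simp add: S Hri Hri2)
  next
    fix X Y Z T f g h
    assume a: "X \<in> cobj CD" "Y \<in> cobj CD" "Z \<in> cobj CD" "T \<in> cobj CD"
      "f \<in> hom CD X Y" "g \<in> hom CE (Ho Y) (Ho Z)" "h \<in> hom CD Z T"
    then have f: "f \<in> carr CD" "cdom CD f = X" "ccod CD f = Y"
      and g: "g \<in> carr CE" "cdom CE g = Ho Y" "ccod CE g = Ho Z"
      and h: "h \<in> carr CD" "cdom CD h = Z" "ccod CD h = T" by (auto simp: hom_def)
    have e1: "ccomp CE (Ha (i T)) (ccomp CE (Ha h) x) = ccomp CE (Ha (Ga (Fa h))) (ccomp CE (Ha (i Z)) x)"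
      if "x \<in> carr CE" "ccod CE x = Ho Z" for x
    proof -
      have "ccomp CD (i T) h = ccomp CD (Ga (Fa h)) (i Z)" using inat[OF h(1)] h by simp
      then have "Ha (ccomp CD (i T) h) = Ha (ccomp CD (Ga (Fa h)) (i Z))" by simp
      then have "ccomp CE (Ha (i T)) (Ha h) = ccomp CE (Ha (Ga (Fa h))) (Ha (i Z))"
        using a h by (simp add: S)
      then have "ccomp CE (ccomp CE (Ha (i T)) (Ha h)) x = ccomp CE (ccomp CE (Ha (Ga (Fa h))) (Ha (i Z))) x"
        by simp
      then show ?thesis using a h that by (simp add: S)
    qed
    have e2: "ccomp CE (Ha f) (Ha (r X)) = ccomp CE (Ha (r Y)) (Ha (Ga (Fa f)))"
    proof -
      have "ccomp CD f (r X) = ccomp CD (r Y) (Ga (Fa f))" using rnat[OF f(1)] f by simp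
      then have "Ha (ccomp CD f (r X)) = Ha (ccomp CD (r Y) (Ga (Fa f)))" by simp
      then show ?thesis using a f by (simp add: S)
    qed
    have e3: "ccomp CD (r T) (ccomp CD (Ga (Fa h)) x) = ccomp CD h (ccomp CD (r Z) x)"
      if "x \<in> carr CD" "ccod CD x = Go (Fo Z)" for x
    proof -
      have "ccomp CD h (r Z) = ccomp CD (r T) (Ga (Fa h))" using rnat[OF h(1)] h by simp
      then have "ccomp CD (ccomp CD h (r Z)) x = ccomp CD (ccomp CD (r T) (Ga (Fa h))) x" by simp
      then show ?thesis using a h that by (simp add: S)
    qed
    have e4: "ccomp CD (Ga (Fa f)) (i X) = ccomp CD (i Y) f"
      using inat[OF f(1)] f by simp
    define g2 where "g2 = ccomp CE (Ha (i Z)) (ccomp CE g (Ha (r Y)))"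
    have g2: "g2 \<in> hom CE (Ho (Go (Fo Y))) (Ho (Go (Fo Z)))"
      unfolding g2_def hom_def using a g by (simp add: S)
    have "ccomp CE (Ha (i T)) (ccomp CE (ccomp CE (Ha h) (ccomp CE g (Ha f))) (Ha (r X)))
       = ccomp CE (Ha (Ga (Fa h))) (ccomp CE g2 (Ha (Ga (Fa f))))"
      unfolding g2_def using a f g h by (simp add: S e1 e2)
    then have "Q X T (ccomp CE (Ha h) (ccomp CE g (Ha f))) = ccomp CC (Fa h) (ccomp CC (Q Y Z g) (Fa f))"
      unfolding Q_def using P2[of "Fo X" "Fo Y" "Fo Z" "Fo T" "Fa f" g2 "Fa h"] a f h g2
      by (simp add: S hom_def g2_def)
    then show "P' X T (ccomp CE (Ha h) (ccomp CE g (Ha f))) = ccomp CD h (ccomp CD (P' Y Z g) f)"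
      unfolding P'_def using a f g h Q[OF a(2,3) g] by (simp add: S e3 e4)
  qed
qed

theorem proposition2p4:
  fixes CD :: "('od, 'ad) cat" and CC :: "('oc, 'ac) cat" and CE :: "('oe, 'ae) cat"
    and Fo :: "'od \<Rightarrow> 'oc" and Fa :: "'ad \<Rightarrow> 'ac"
    and Go :: "'oc \<Rightarrow> 'od" and Ga :: "'ac \<Rightarrow> 'ad"
    and Ho :: "'od \<Rightarrow> 'oe" and Ha :: "'ad \<Rightarrow> 'ae"
  assumes F: "is_functor CD CC Fo Fa"
    and G: "is_functor CC CD Go Ga"
    and H: "is_functor CD CE Ho Ha"
    and adj: "adjunction CD CC Fo Fa Go Ga \<or> adjunction CC CD Go Ga Fo Fa"
    and HG: "naturally_full CC CE (Ho \<circ> Go) (Ha \<circ> Ga)"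
    and Fsep: "separable CD CC Fo Fa"
  shows "naturally_full CD CE Ho Ha"
proof -
  have cD: "category CD" and cC: "category CC"
    using F unfolding is_functor_def by auto
  note S = cat_simps[OF cD] cat_simps[OF cC] fun_simps[OF F] fun_simps[OF G]
  obtain T where T1: "\<forall>A \<in> cobj CD. \<forall>A' \<in> cobj CD. \<forall>u \<in> hom CC (Fo A) (Fo A'). T A A' u \<in> hom CD A A'"
    and T2: "\<forall>A \<in> cobj CD. \<forall>A' \<in> cobj CD. \<forall>f \<in> hom CD A A'. T A A' (Fa f) = f"
    and T3: "\<forall>X \<in> cobj CD. \<forall>Y \<in> cobj CD. \<forall>Z \<in> cobj CD. \<forall>T' \<in> cobj CD.
       \<forall>f \<in> hom CD X Y. \<forall>g \<in> hom CC (Fo Y) (Fo Z). \<forall>h \<in> hom CD Z T'.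
          T X T' (ccomp CC (Fa h) (ccomp CC g (Fa f))) = ccomp CD h (ccomp CD (T Y Z g) f)"
    using Fsep unfolding separable_def by (elim exE conjE)
  have Tm: "\<And>A A' u. A \<in> cobj CD \<Longrightarrow> A' \<in> cobj CD \<Longrightarrow> u \<in> carr CC \<Longrightarrow> cdom CC u = Fo A \<Longrightarrow> ccod CC u = Fo A'
     \<Longrightarrow> T A A' u \<in> carr CD \<and> cdom CD (T A A' u) = A \<and> ccod CD (T A A' u) = A'"
    using T1 unfolding hom_def by blast
  have TF: "\<And>A. A \<in> cobj CD \<Longrightarrow> T A A (cid CC (Fo A)) = cid CD A"
  proof -
    fix A assume A: "A \<in> cobj CD"
    have "cid CD A \<in> hom CD A A" using A by (simp add: S hom_def)
    then have "T A A (Fa (cid CD A)) = cid CD A" using T2 A by blast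
    then show "T A A (cid CC (Fo A)) = cid CD A" using A by (simp add: S)
  qed
  have Tn: "\<And>X Y Z T' f g h. X \<in> cobj CD \<Longrightarrow> Y \<in> cobj CD \<Longrightarrow> Z \<in> cobj CD \<Longrightarrow> T' \<in> cobj CD \<Longrightarrow>
       f \<in> hom CD X Y \<Longrightarrow> g \<in> hom CC (Fo Y) (Fo Z) \<Longrightarrow> h \<in> hom CD Z T' \<Longrightarrow>
          T X T' (ccomp CC (Fa h) (ccomp CC g (Fa f))) = ccomp CD h (ccomp CD (T Y Z g) f)"
    using T3 by blast
  from adj show ?thesis
  proof
    assume ad: "adjunction CD CC Fo Fa Go Ga"
    obtain \<eta> \<epsilon> where
      e1: "\<forall>A \<in> cobj CD. \<eta> A \<in> hom CD A (Go (Fo A))"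
      and e2: "\<forall>A \<in> cobj CD. \<forall>B \<in> cobj CD. \<forall>f \<in> hom CD A B.
         ccomp CD (Ga (Fa f)) (\<eta> A) = ccomp CD (\<eta> B) f"
      and e3: "\<forall>U \<in> cobj CC. \<epsilon> U \<in> hom CC (Fo (Go U)) U"
      and e4: "\<forall>U \<in> cobj CC. \<forall>V \<in> cobj CC. \<forall>g \<in> hom CC U V.
         ccomp CC (\<epsilon> V) (Fa (Ga g)) = ccomp CC g (\<epsilon> U)"
      and e5: "\<forall>A \<in> cobj CD. ccomp CC (\<epsilon> (Fo A)) (Fa (\<eta> A)) = cid CC (Fo A)"
      and e6: "\<forall>U \<in> cobj CC. ccomp CD (Ga (\<epsilon> U)) (\<eta> (Go U)) = cid CD (Go U)"
      using ad unfolding adjunction_def by (elim exE conjE)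
    have eta: "\<And>A. A \<in> cobj CD \<Longrightarrow> \<eta> A \<in> carr CD \<and> cdom CD (\<eta> A) = A \<and> ccod CD (\<eta> A) = Go (Fo A)"
      using e1 by (simp add: hom_def)
    have eps: "\<And>U. U \<in> cobj CC \<Longrightarrow> \<epsilon> U \<in> carr CC \<and> cdom CC (\<epsilon> U) = Fo (Go U) \<and> ccod CC (\<epsilon> U) = U"
      using e3 by (simp add: hom_def)
    define r where "r A = T (Go (Fo A)) A (\<epsilon> (Fo A))" for A
    have r: "r A \<in> carr CD \<and> ccod CD (r A) = A \<and> cdom CD (r A) = Go (Fo A)" if "A \<in> cobj CD" for A
      unfolding r_def using Tm[of "Go (Fo A)" A "\<epsilon> (Fo A)"] eps[of "Fo A"] that by (simp add: S)
    show ?thesis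
    proof (rule core[OF F G H HG, of \<eta> r])
      show "\<And>A. A \<in> cobj CD \<Longrightarrow> \<eta> A \<in> carr CD \<and> cdom CD (\<eta> A) = A \<and> ccod CD (\<eta> A) = Go (Fo A)"
        by (rule eta)
      show "\<And>A. A \<in> cobj CD \<Longrightarrow> r A \<in> carr CD \<and> ccod CD (r A) = A \<and> cdom CD (r A) = Go (Fo A)"
        by (rule r)
      show "ccomp CD (r A) (\<eta> A) = cid CD A" if A: "A \<in> cobj CD" for A
      proof -
        have "T A A (ccomp CC (Fa (cid CD A)) (ccomp CC (\<epsilon> (Fo A)) (Fa (\<eta> A))))
            = ccomp CD (cid CD A) (ccomp CD (T (Go (Fo A)) A (\<epsilon> (Fo A))) (\<eta> A))"
          using A eta[OF A] eps[of "Fo A"] r[OF A]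
          by (intro Tn) (simp_all add: S hom_def r_def)
        then show ?thesis using A eta[OF A] eps[of "Fo A"] r[OF A] e5 TF
          by (simp add: S r_def)
      qed
      show "ccomp CD (\<eta> (ccod CD f)) f = ccomp CD (Ga (Fa f)) (\<eta> (cdom CD f))" if "f \<in> carr CD" for f
      proof -
        have a: "cdom CD f \<in> cobj CD" and b: "ccod CD f \<in> cobj CD" using that by (simp_all add: S)
        have fh: "f \<in> hom CD (cdom CD f) (ccod CD f)" using that by (simp add: hom_def)
        show ?thesis using bspec[OF bspec[OF bspec[OF e2 a] b] fh] by simp
      qed
      show "ccomp CD f (r (cdom CD f)) = ccomp CD (r (ccod CD f)) (Ga (Fa f))" if f: "f \<in> carr CD" for f
      proof -
        define A where "A = cdom CD f"
        define B where "B = ccod CD f"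
        have A: "A \<in> cobj CD" and B: "B \<in> cobj CD" using f unfolding A_def B_def by (simp_all add: S)
        have 1: "T (Go (Fo A)) B (ccomp CC (Fa f) (ccomp CC (\<epsilon> (Fo A)) (Fa (cid CD (Go (Fo A))))))
            = ccomp CD f (ccomp CD (r A) (cid CD (Go (Fo A))))"
          using A B f eps[of "Fo A"] r[OF A] unfolding r_def
          by (intro Tn) (simp_all add: S hom_def A_def B_def)
        have 2: "T (Go (Fo A)) B (ccomp CC (Fa (cid CD B)) (ccomp CC (\<epsilon> (Fo B)) (Fa (Ga (Fa f)))))
            = ccomp CD (cid CD B) (ccomp CD (r B) (Ga (Fa f)))"
          using A B f eps[of "Fo B"] r[OF B] unfolding r_def
          by (intro Tn) (simp_all add: S hom_def A_def B_def)
        have 3: "ccomp CC (\<epsilon> (Fo B)) (Fa (Ga (Fa f))) = ccomp CC (Fa f) (\<epsilon> (Fo A))"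
          using e4 A B f by (simp add: S hom_def A_def B_def)
        have fAB: "cdom CD f = A" "ccod CD f = B" unfolding A_def B_def by simp_all
        have "ccomp CC (Fa f) (ccomp CC (\<epsilon> (Fo A)) (Fa (cid CD (Go (Fo A))))) = ccomp CC (Fa f) (\<epsilon> (Fo A))"
          using A B f fAB eps[of "Fo A"] by (simp add: S)
        moreover have "ccomp CD f (ccomp CD (r A) (cid CD (Go (Fo A)))) = ccomp CD f (r A)"
          using A B f fAB r[OF A] by (simp add: S)
        moreover have "ccomp CC (Fa (cid CD B)) (ccomp CC (\<epsilon> (Fo B)) (Fa (Ga (Fa f)))) = ccomp CC (Fa f) (\<epsilon> (Fo A))"
          using A B f fAB eps[of "Fo A"] 3 by (simp add: S)
        moreover have "ccomp CD (cid CD B) (ccomp CD (r B) (Ga (Fa f))) = ccomp CD (r B) (Ga (Fa f))"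
          using A B f fAB r[OF B] by (simp add: S)
        ultimately show ?thesis using 1 2 fAB by simp
      qed
    qed
  next
    assume ad: "adjunction CC CD Go Ga Fo Fa"
    obtain \<eta> \<epsilon> where
      e1: "\<forall>U \<in> cobj CC. \<eta> U \<in> hom CC U (Fo (Go U))"
      and e2: "\<forall>U \<in> cobj CC. \<forall>V \<in> cobj CC. \<forall>g \<in> hom CC U V.
         ccomp CC (Fa (Ga g)) (\<eta> U) = ccomp CC (\<eta> V) g"
      and e3: "\<forall>A \<in> cobj CD. \<epsilon> A \<in> hom CD (Go (Fo A)) A"
      and e4: "\<forall>A \<in> cobj CD. \<forall>B \<in> cobj CD. \<forall>f \<in> hom CD A B.
         ccomp CD (\<epsilon> B) (Ga (Fa f)) = ccomp CD f (\<epsilon> A)"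
      and e5: "\<forall>U \<in> cobj CC. ccomp CD (\<epsilon> (Go U)) (Ga (\<eta> U)) = cid CD (Go U)"
      and e6: "\<forall>A \<in> cobj CD. ccomp CC (Fa (\<epsilon> A)) (\<eta> (Fo A)) = cid CC (Fo A)"
      using ad unfolding adjunction_def by (elim exE conjE)
    have eta: "\<And>U. U \<in> cobj CC \<Longrightarrow> \<eta> U \<in> carr CC \<and> cdom CC (\<eta> U) = U \<and> ccod CC (\<eta> U) = Fo (Go U)"
      using e1 by (simp add: hom_def)
    have eps: "\<And>A. A \<in> cobj CD \<Longrightarrow> \<epsilon> A \<in> carr CD \<and> ccod CD (\<epsilon> A) = A \<and> cdom CD (\<epsilon> A) = Go (Fo A)"
      using e3 by (simp add: hom_def)
    define i where "i A = T A (Go (Fo A)) (\<eta> (Fo A))" for A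
    have i: "i A \<in> carr CD \<and> cdom CD (i A) = A \<and> ccod CD (i A) = Go (Fo A)" if "A \<in> cobj CD" for A
      unfolding i_def using Tm[of A "Go (Fo A)" "\<eta> (Fo A)"] eta[of "Fo A"] that by (simp add: S)
    show ?thesis
    proof (rule core[OF F G H HG, of i \<epsilon>])
      show "\<And>A. A \<in> cobj CD \<Longrightarrow> i A \<in> carr CD \<and> cdom CD (i A) = A \<and> ccod CD (i A) = Go (Fo A)"
        by (rule i)
      show "\<And>A. A \<in> cobj CD \<Longrightarrow> \<epsilon> A \<in> carr CD \<and> ccod CD (\<epsilon> A) = A \<and> cdom CD (\<epsilon> A) = Go (Fo A)"
        by (rule eps)
      show "ccomp CD (\<epsilon> A) (i A) = cid CD A" if A: "A \<in> cobj CD" for A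
      proof -
        have 1: "T A A (ccomp CC (Fa (\<epsilon> A)) (ccomp CC (\<eta> (Fo A)) (Fa (cid CD A))))
            = ccomp CD (\<epsilon> A) (ccomp CD (T A (Go (Fo A)) (\<eta> (Fo A))) (cid CD A))"
          using A eta[of "Fo A"] eps[OF A] i[OF A]
          by (intro Tn) (simp_all add: S hom_def i_def)
        have "ccomp CC (Fa (\<epsilon> A)) (ccomp CC (\<eta> (Fo A)) (Fa (cid CD A))) = cid CC (Fo A)"
          using A eta[of "Fo A"] eps[OF A] e6 by (simp add: S)
        moreover have "ccomp CD (\<epsilon> A) (ccomp CD (T A (Go (Fo A)) (\<eta> (Fo A))) (cid CD A)) = ccomp CD (\<epsilon> A) (i A)"
          using A i[OF A] by (simp add: S i_def[symmetric])
        ultimately show ?thesis using 1 TF[OF A] by simp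
      qed
      show "ccomp CD f (\<epsilon> (cdom CD f)) = ccomp CD (\<epsilon> (ccod CD f)) (Ga (Fa f))" if "f \<in> carr CD" for f
      proof -
        have a: "cdom CD f \<in> cobj CD" and b: "ccod CD f \<in> cobj CD" using that by (simp_all add: S)
        have fh: "f \<in> hom CD (cdom CD f) (ccod CD f)" using that by (simp add: hom_def)
        show ?thesis using bspec[OF bspec[OF bspec[OF e4 a] b] fh] by simp
      qed
      show "ccomp CD (i (ccod CD f)) f = ccomp CD (Ga (Fa f)) (i (cdom CD f))" if f: "f \<in> carr CD" for f
      proof -
        define A where "A = cdom CD f"
        define B where "B = ccod CD f"
        have A: "A \<in> cobj CD" and B: "B \<in> cobj CD" using f unfolding A_def B_def by (simp_all add: S)
        have fAB: "cdom CD f = A" "ccod CD f = B" unfolding A_def B_def by simp_all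
        have 1: "T A (Go (Fo B)) (ccomp CC (Fa (cid CD (Go (Fo B)))) (ccomp CC (\<eta> (Fo B)) (Fa f)))
            = ccomp CD (cid CD (Go (Fo B))) (ccomp CD (i B) f)"
          using A B f fAB eta[of "Fo B"] i[OF B] unfolding i_def
          by (intro Tn) (simp_all add: S hom_def)
        have 2: "T A (Go (Fo B)) (ccomp CC (Fa (Ga (Fa f))) (ccomp CC (\<eta> (Fo A)) (Fa (cid CD A))))
            = ccomp CD (Ga (Fa f)) (ccomp CD (i A) (cid CD A))"
          using A B f fAB eta[of "Fo A"] i[OF A] unfolding i_def
          by (intro Tn) (simp_all add: S hom_def)
        have fh: "Fa f \<in> hom CC (Fo A) (Fo B)" using f fAB by (simp add: S hom_def)
        have 3: "ccomp CC (Fa (Ga (Fa f))) (\<eta> (Fo A)) = ccomp CC (\<eta> (Fo B)) (Fa f)"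
        proof -
          have FA: "Fo A \<in> cobj CC" and FB: "Fo B \<in> cobj CC" using A B by (simp_all add: S)
          show ?thesis using bspec[OF bspec[OF bspec[OF e2 FA] FB] fh] by simp
        qed
        have "ccomp CC (Fa (cid CD (Go (Fo B)))) (ccomp CC (\<eta> (Fo B)) (Fa f)) = ccomp CC (\<eta> (Fo B)) (Fa f)"
          using A B f fAB eta[of "Fo B"] by (simp add: S)
        moreover have "ccomp CD (cid CD (Go (Fo B))) (ccomp CD (i B) f) = ccomp CD (i B) f"
          using A B f fAB i[OF B] by (simp add: S)
        moreover have "ccomp CC (Fa (Ga (Fa f))) (ccomp CC (\<eta> (Fo A)) (Fa (cid CD A))) = ccomp CC (\<eta> (Fo B)) (Fa f)"
          using A B f fAB eta[of "Fo A"] 3 by (simp add: S)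
        moreover have "ccomp CD (Ga (Fa f)) (ccomp CD (i A) (cid CD A)) = ccomp CD (Ga (Fa f)) (i A)"
          using A B f fAB i[OF A] by (simp add: S)
        ultimately show ?thesis using 1 2 fAB by simp
      qed
    qed
  qed
qed
end
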